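(* Let $(\Omega,\mathbb B(\Omega),\mu,T)$ be a measure-preserving dynamical system where $\Omega$ is an interval in $\mathbb R$ and $T$ is strong-mixing, i.e. $\lim_{n\to\infty}\mu(T^{-n}A\cap B)=\mu(A)\mu(B)$ for all $A,B\in\mathbb B(\Omega)$. Then, with $\mathrm{id}$ the identity map on $\Omega$, $$\lim_{d\to\infty}\big(h^{\mathrm{id}}_{\mu,\triangle}(T,d)-h^{\mathrm{id}}_{\mu,\mathrm{cond}}(T,d)\big)=0.$$
   Context: A measure-preserving dynamical system $(\Omega,\mathbb B(\Omega),\mu,T)$: $\mathbb B(\Omega)$ the Borel $\sigma$-algebra, $\mu$ a probability measure, $T:\Omega\to\Omega$ measurable with $\mu(T^{-1}B)=\mu(B)$. For a finite partition $\mathcal P=\{P_0,\dots,P_l\}$: $H(\mathcal P)=-\sum_P\mu(P)\ln\mu(P)$ ($0\ln0=0$), and $\mathcal P_2$ consists of the sets $P_a\cap T^{-1}(P_b)$. Let $\Pi_d$ be the set of permutations of $\{0,\dots,d\}$; $(x_0,\dots,x_d)$ has ordinal pattern $\pi=(r_0,\dots,r_d)$ if $x_{r_0}\ge\dots\ge x_{r_d}$ and $r_{l-1}>r_l$ whenever $x_{r_{l-1}}=x_{r_l}$. The ordinal partition $\mathcal P^{\mathrm{id}}(d)$ consists of the sets $P_\pi=\{\omega\in\Omega:(T^d\omega,T^{d-1}\omega,\dots,T\omega,\omega)\text{ has ordinal pattern }\pi\}$, $\pi\in\Pi_d$. Sorting entropy: $h^{\mathrm{id}}_{\mu,\triangle}(T,d)=H(\mathcal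 P^{\mathrm{id}}(d+1))-H(\mathcal P^{\mathrm{id}}(d))$. Conditional entropy of ordinal patterns: $h^{\mathrm{id}}_{\mu,\mathrm{cond}}(T,d)=H(\mathcal P^{\mathrm{id}}(d)_2)-H(\mathcal P^{\mathrm{id}}(d))$. *)

theory Defs
  imports "HOL-Probability.Probability"
begin

definition perms_of :: "nat \<Rightarrow> nat list set" where
  "perms_of d = {r. distinct r \<and> set r = {0..d}}"

definition has_ordpat :: "nat \<Rightarrow> (nat \<Rightarrow> real) \<Rightarrow> nat list \<Rightarrow> bool" where
  "has_ordpat d x r \<longleftrightarrow> r \<in> perms_of d \<and>
     (\<forall>l\<in>{1..d}. x (r ! (l - 1)) \<ge> x (r ! l) \<and>
        (x (r ! (l - 1)) = x (r ! l) \<longrightarrow> r ! (l - 1) > r ! l))"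

text \<open>P_pi: the set of omega such that (T^d omega, ..., T omega, omega) has pattern pi,
  i.e. x_i = T^(d-i) omega.\<close>
definition ord_set :: "real measure \<Rightarrow> (real \<Rightarrow> real) \<Rightarrow> nat \<Rightarrow> nat list \<Rightarrow> real set" where
  "ord_set M T d r = {\<omega> \<in> space M. has_ordpat d (\<lambda>i. (T ^^ (d - i)) \<omega>) r}"

text \<open>Entropy of a finite partition given as an indexed family of pairwise disjoint sets
  (0 ln 0 = 0 holds since ln 0 = 0 in Isabelle).\<close>
definition part_entropy :: "'a measure \<Rightarrow> ('i \<Rightarrow> 'a set) \<Rightarrow> 'i set \<Rightarrow> real" where
  "part_entropy M P I = - (\<Sum>i\<in>I. measure M (P i) * ln (measure M (P i)))"

definition H_ord :: "real measure \<Rightarrow> (real \<Rightarrow> real) \<Rightarrow> nat \<Rightarrow> real" where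
  "H_ord M T d = part_entropy M (ord_set M T d) (perms_of d)"

definition H_ord2 :: "real measure \<Rightarrow> (real \<Rightarrow> real) \<Rightarrow> nat \<Rightarrow> real" where
  "H_ord2 M T d = part_entropy M
     (\<lambda>(a, b). ord_set M T d a \<inter> (T -` ord_set M T d b \<inter> space M))
     (perms_of d \<times> perms_of d)"

definition sorting_entropy :: "real measure \<Rightarrow> (real \<Rightarrow> real) \<Rightarrow> nat \<Rightarrow> real" where
  "sorting_entropy M T d = H_ord M T (Suc d) - H_ord M T d"

definition cond_entropy_ord :: "real measure \<Rightarrow> (real \<Rightarrow> real) \<Rightarrow> nat \<Rightarrow> real" where
  "cond_entropy_ord M T d = H_ord2 M T d - H_ord M T d"

end

theory Submission
  imports Defs
begin

definition lt :: "(nat \<Rightarrow> real) \<Rightarrow> nat \<Rightarrow> nat \<Rightarrow> bool" where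
  "lt x i j \<longleftrightarrow> x j < x i \<or> (x i = x j \<and> j < i)"

lemma lt_irrefl: "\<not> lt x i i" by (auto simp: lt_def)
lemma lt_trans: "lt x i j \<Longrightarrow> lt x j k \<Longrightarrow> lt x i k" by (auto simp: lt_def)
lemma lt_asym: "lt x i j \<Longrightarrow> \<not> lt x j i" by (auto simp: lt_def)
lemma lt_total: "i \<noteq> j \<Longrightarrow> lt x i j \<or> lt x j i" by (auto simp: lt_def)

definition rank :: "(nat \<Rightarrow> real) \<Rightarrow> nat \<Rightarrow> nat \<Rightarrow> nat" where
  "rank x d i = card {j\<in>{0..d}. lt x j i}"

lemma rank_mono: assumes "lt x i j" "j \<le> d" "i \<le> d" shows "rank x d i < rank x d j"
proof -
  have sub: "{k\<in>{0..d}. lt x k i} \<subseteq> {k\<in>{0..d}. lt x k j}"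
    using assms(1) lt_trans[of x _ i j] by auto
  have "i \<in> {k\<in>{0..d}. lt x k j}" "i \<notin> {k\<in>{0..d}. lt x k i}"
    using assms lt_irrefl[of x i] by (auto simp: lt_def)
  then have "{k\<in>{0..d}. lt x k i} \<subset> {k\<in>{0..d}. lt x k j}" using sub by blast
  then show ?thesis unfolding rank_def by (simp add: psubset_card_mono)
qed

lemma rank_iff: assumes "i \<le> d" "j \<le> d" shows "rank x d i < rank x d j \<longleftrightarrow> lt x i j"
proof
  assume h: "rank x d i < rank x d j"
  show "lt x i j"
  proof (rule ccontr)
    assume "\<not> lt x i j"
    then have "i = j \<or> lt x j i" using lt_total[of i j x] by blast
    then show False using h rank_mono[of x j i d] assms by auto
  qed
next
  assume "lt x i j" then show "rank x d i < rank x d j" using rank_mono assms by blast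
qed

lemma perms_len: "r \<in> perms_of d \<Longrightarrow> length r = Suc d"
  unfolding perms_of_def using distinct_card by fastforce

lemma finite_perms: "finite (perms_of d)"
proof -
  have "perms_of d \<subseteq> {xs. set xs \<subseteq> {0..d} \<and> length xs \<le> Suc d}"
    using perms_len unfolding perms_of_def by auto
  moreover have "finite {xs. set xs \<subseteq> {0..d} \<and> length xs \<le> Suc d}"
    by (rule finite_lists_length_le) simp
  ultimately show ?thesis by (rule finite_subset)
qed

lemma ordpat_iff:
  "has_ordpat d x r \<longleftrightarrow> r \<in> perms_of d \<and> sorted_wrt (\<lambda>i j. lt x i j) r"
proof (cases "r \<in> perms_of d")
  case True
  have tr: "transp (\<lambda>i j. lt x i j)" by (auto simp: transp_def intro: lt_trans)
  have len: "length r = Suc d" using perms_len[OF True] .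
  have "(\<forall>l\<in>{1..d}. x (r ! (l - 1)) \<ge> x (r ! l) \<and>
        (x (r ! (l - 1)) = x (r ! l) \<longrightarrow> r ! (l - 1) > r ! l))
      \<longleftrightarrow> (\<forall>i. Suc i < length r \<longrightarrow> lt x (r!i) (r!Suc i))"
  proof
    assume H: "\<forall>l\<in>{1..d}. x (r ! (l - 1)) \<ge> x (r ! l) \<and>
        (x (r ! (l - 1)) = x (r ! l) \<longrightarrow> r ! (l - 1) > r ! l)"
    show "\<forall>i. Suc i < length r \<longrightarrow> lt x (r!i) (r!Suc i)"
    proof (intro allI impI)
      fix i assume "Suc i < length r"
      then have "Suc i \<in> {1..d}" using len by auto
      from H[rule_format, OF this] show "lt x (r!i) (r!Suc i)"
        by (auto simp: lt_def)
    qed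
  next
    assume H: "\<forall>i. Suc i < length r \<longrightarrow> lt x (r!i) (r!Suc i)"
    show "\<forall>l\<in>{1..d}. x (r ! (l - 1)) \<ge> x (r ! l) \<and>
        (x (r ! (l - 1)) = x (r ! l) \<longrightarrow> r ! (l - 1) > r ! l)"
    proof
      fix l assume l: "l \<in> {1..d}"
      then obtain i where i: "l = Suc i" by (cases l) auto
      have "Suc i < length r" using l i len by auto
      from H[rule_format, OF this] show "x (r ! (l - 1)) \<ge> x (r ! l) \<and>
        (x (r ! (l - 1)) = x (r ! l) \<longrightarrow> r ! (l - 1) > r ! l)"
        using i by (auto simp: lt_def)
    qed
  qed
  then show ?thesis using True
    unfolding has_ordpat_def sorted_wrt_iff_nth_Suc_transp[OF tr] by simp
next
  case False
  then show ?thesis unfolding has_ordpat_def by simp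
qed

lemma rank_inj: assumes "i \<le> d" "j \<le> d" "rank x d i = rank x d j" shows "i = j"
  using rank_iff[OF assms(1,2), of x] rank_iff[OF assms(2,1), of x] lt_total[of i j x] assms(3) by auto

lemma ordpat_exists: "\<exists>r. has_ordpat d x r"
proof -
  define r where "r = sort_key (rank x d) [0..<Suc d]"
  have sr: "set r = {0..d}" unfolding r_def by auto
  have "sorted (map (rank x d) r)" unfolding r_def by simp
  moreover have "distinct (map (rank x d) r)"
  proof -
    have "inj_on (rank x d) (set r)" using sr rank_inj by (auto simp: inj_on_def)
    moreover have "distinct r" by (simp add: r_def)
    ultimately show ?thesis by (simp add: distinct_map)
  qed
  ultimately have "sorted_wrt (<) (map (rank x d) r)" by (simp add: strict_sorted_iff)
  then have "sorted_wrt (\<lambda>i j. rank x d i < rank x d j) r" by (simp add: sorted_wrt_map)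
  then have "sorted_wrt (\<lambda>i j. lt x i j) r"
    by (rule sorted_wrt_mono_rel[rotated]) (use sr rank_iff in auto)
  moreover have "r \<in> perms_of d" unfolding r_def perms_of_def by auto
  ultimately show ?thesis by (auto simp: ordpat_iff)
qed

lemma ordpat_unique:
  assumes "has_ordpat d x r" "has_ordpat d x r'" shows "r = r'"
proof -
  from assms have s: "sorted_wrt (\<lambda>i j. lt x i j) r" "sorted_wrt (\<lambda>i j. lt x i j) r'"
    and p: "r \<in> perms_of d" "r' \<in> perms_of d" by (auto simp: ordpat_iff)
  have s1: "sorted_wrt (\<lambda>i j. rank x d i < rank x d j) r"
    by (rule sorted_wrt_mono_rel[OF _ s(1)]) (use p rank_iff in \<open>auto simp: perms_of_def\<close>)
  have s1': "sorted_wrt (\<lambda>i j. rank x d i < rank x d j) r'"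
    by (rule sorted_wrt_mono_rel[OF _ s(2)]) (use p rank_iff in \<open>auto simp: perms_of_def\<close>)
  have s2: "sorted_wrt (<) (map (rank x d) r)" "sorted_wrt (<) (map (rank x d) r')"
    using s1 s1' by (simp_all add: sorted_wrt_map)
  have inj: "inj_on (rank x d) {0..d}"
    using rank_inj by (auto simp: inj_on_def)
  show ?thesis
    apply (rule map_sorted_distinct_set_unique[of "rank x d"])
    using s2 p inj by (auto simp: strict_sorted_iff perms_of_def)
qed

lemma ordpat_rel:
  assumes "has_ordpat d x r" "has_ordpat d y r" "i \<le> d" "j \<le> d"
  shows "lt x i j \<longleftrightarrow> lt y i j"
proof -
  from assms have s: "sorted_wrt (\<lambda>i j. lt x i j) r" "sorted_wrt (\<lambda>i j. lt y i j) r"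
    and p: "r \<in> perms_of d" by (auto simp: ordpat_iff)
  have "i \<in> set r" "j \<in> set r" using p assms(3,4) by (auto simp: perms_of_def)
  then obtain p q where pq: "p < length r" "q < length r" "r!p = i" "r!q = j"
    by (metis in_set_conv_nth)
  consider "p < q" | "p = q" | "q < p" by linarith
  then show ?thesis
  proof cases
    case 1 then show ?thesis using sorted_wrt_nth_less[OF s(1) 1 pq(2)] sorted_wrt_nth_less[OF s(2) 1 pq(2)] pq by simp
  next
    case 2 then show ?thesis using pq by (simp add: lt_irrefl)
  next
    case 3 then show ?thesis using sorted_wrt_nth_less[OF s(1) 3 pq(1)] sorted_wrt_nth_less[OF s(2) 3 pq(1)] pq lt_asym by metis
  qed
qed

lemma ordpat_transfer:
  assumes "has_ordpat d x r" "\<And>i j. i \<le> d \<Longrightarrow> j \<le> d \<Longrightarrow> lt x i j \<longleftrightarrow> lt y i j"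
  shows "has_ordpat d y r"
proof -
  from assms have s: "sorted_wrt (\<lambda>i j. lt x i j) r"
    and p: "r \<in> perms_of d" by (auto simp: ordpat_iff)
  have "sorted_wrt (\<lambda>i j. lt y i j) r"
    apply (rule sorted_wrt_mono_rel[OF _ s])
    using assms(2) p by (auto simp: perms_of_def)
  then show ?thesis using p by (simp add: ordpat_iff)
qed

lemma lt_shift: "lt (\<lambda>i. x (Suc i)) i j \<longleftrightarrow> lt x (Suc i) (Suc j)"
  by (auto simp: lt_def)

lemma ordpat_cong:
  assumes "\<And>i. i \<le> d \<Longrightarrow> x i = y i" shows "has_ordpat d x r \<longleftrightarrow> has_ordpat d y r"
proof
  assume h: "has_ordpat d x r"
  show "has_ordpat d y r" by (rule ordpat_transfer[OF h]) (simp add: lt_def assms)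
next
  assume h: "has_ordpat d y r"
  show "has_ordpat d x r" by (rule ordpat_transfer[OF h]) (simp add: lt_def assms)
qed

lemma lt_flip: "i \<noteq> j \<Longrightarrow> lt x j i \<longleftrightarrow> \<not> lt x i j"
  by (auto simp: lt_def)

lemma lt_agree:
  assumes "\<And>i j. i \<le> d \<Longrightarrow> j \<le> d \<Longrightarrow> lt x i j = lt y i j"
    and "\<And>i j. i \<le> d \<Longrightarrow> j \<le> d \<Longrightarrow> lt x (Suc i) (Suc j) = lt y (Suc i) (Suc j)"
    and "lt x 0 (Suc d) = lt y 0 (Suc d)"
    and "i \<le> Suc d" "j \<le> Suc d"
  shows "lt x i j = lt y i j"
proof -
  consider "i \<le> d \<and> j \<le> d" | "i \<ge> 1 \<and> j \<ge> 1" | "i = 0 \<and> j = Suc d" | "i = Suc d \<and> j = 0"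
    using assms(4,5) by linarith
  then show ?thesis
  proof cases
    case 1 then show ?thesis using assms(1) by auto
  next
    case 2
    then obtain i' j' where "i = Suc i'" "j = Suc j'" by (cases i; cases j) auto
    moreover have "i' \<le> d" "j' \<le> d" using assms(4,5) \<open>i = Suc i'\<close> \<open>j = Suc j'\<close> by simp_all
    ultimately show ?thesis using assms(2)[of i' j'] by simp
  next
    case 3 then show ?thesis using assms(3) by auto
  next
    case 4 then show ?thesis using assms(3) lt_flip[of 0 "Suc d" x] lt_flip[of 0 "Suc d" y] by simp
  qed
qed

definition g :: "real \<Rightarrow> real" where "g t = t * ln t"

lemma sum_single:
  assumes "finite K" "k0 \<in> K" "\<And>k. k \<in> K \<Longrightarrow> k \<noteq> k0 \<Longrightarrow> h k = 0"
  shows "sum h K = h k0"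
proof -
  have "sum h K = h k0 + sum h (K - {k0})" using assms(1,2) by (simp add: sum.remove)
  also have "sum h (K - {k0}) = 0" using assms(3) by (intro sum.neutral) auto
  finally show ?thesis by simp
qed

locale sys = prob_space M for M :: "real measure" +
  fixes T :: "real \<Rightarrow> real" and \<Omega> :: "real set"
  assumes Msets: "sets M = sets (restrict_space borel \<Omega>)"
    and Tm: "T \<in> measurable M M"
    and Tinv: "\<forall>B\<in>sets M. measure M (T -` B \<inter> space M) = measure M B"
begin

definition Y :: "nat \<Rightarrow> real \<Rightarrow> nat \<Rightarrow> real" where
  "Y d \<omega> i = (T ^^ (Suc d - i)) \<omega>"

definition P :: "nat \<Rightarrow> nat list \<Rightarrow> real set" where
  "P d r = ord_set M T (Suc d) r"

definition Q :: "nat \<Rightarrow> nat list \<Rightarrow> nat list \<Rightarrow> real set" where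
  "Q d a b = ord_set M T d a \<inter> (T -` ord_set M T d b \<inter> space M)"

definition E :: "nat \<Rightarrow> real set" where
  "E d = {\<omega>\<in>space M. lt (Y d \<omega>) 0 (Suc d)}"

definition C :: "nat \<Rightarrow> nat list \<Rightarrow> nat list \<Rightarrow> bool \<Rightarrow> real set" where
  "C d a b e = Q d a b \<inter> (if e then E d else space M - E d)"

definition V :: "nat \<Rightarrow> real set" where
  "V d = {\<omega>\<in>space M. \<forall>j\<in>{1..d}. \<not>(\<omega> < (T^^j) \<omega> \<and> (T^^j) \<omega> < (T^^Suc d) \<omega>)
      \<and> \<not>((T^^Suc d) \<omega> < (T^^j) \<omega> \<and> (T^^j) \<omega> < \<omega>)}"

lemma T_space: "\<omega> \<in> space M \<Longrightarrow> T \<omega> \<in> space M"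
  using Tm by (auto dest: measurable_space)

lemma P_iff: "\<omega> \<in> P d r \<longleftrightarrow> \<omega> \<in> space M \<and> has_ordpat (Suc d) (Y d \<omega>) r"
  unfolding P_def ord_set_def Y_def by simp

lemma Q_iff: "\<omega> \<in> Q d a b \<longleftrightarrow> \<omega> \<in> space M \<and> has_ordpat d (\<lambda>i. Y d \<omega> (Suc i)) a
   \<and> has_ordpat d (Y d \<omega>) b"
proof -
  have 1: "has_ordpat d (\<lambda>i. (T ^^ (d - i)) \<omega>) a = has_ordpat d (\<lambda>i. Y d \<omega> (Suc i)) a"
    by (rule ordpat_cong) (simp add: Y_def)
  have 2: "has_ordpat d (\<lambda>i. (T ^^ (d - i)) (T \<omega>)) b = has_ordpat d (Y d \<omega>) b"
  proof (rule ordpat_cong)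
    fix i assume "i \<le> d"
    then have "Suc d - i = Suc (d - i)" by simp
    then show "(T ^^ (d - i)) (T \<omega>) = Y d \<omega> i"
      unfolding Y_def by (simp only: funpow_Suc_right o_apply)
  qed
  have m: "\<And>w e r. w \<in> ord_set M T e r \<longleftrightarrow> w \<in> space M \<and> has_ordpat e (\<lambda>i. (T ^^ (e - i)) w) r"
    unfolding ord_set_def by blast
  show ?thesis unfolding Q_def Int_iff vimage_eq m using 1 2 T_space by blast
qed

lemma C1:
  assumes "\<omega> \<in> Q d a b" "\<omega>' \<in> Q d a b" "\<omega> \<in> E d \<longleftrightarrow> \<omega>' \<in> E d"
    "has_ordpat (Suc d) (Y d \<omega>) r"
  shows "has_ordpat (Suc d) (Y d \<omega>') r"
proof (rule ordpat_transfer[OF assms(4)])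
  fix i j assume ij: "i \<le> Suc d" "j \<le> Suc d"
  from assms(1,2) have qa: "has_ordpat d (\<lambda>i. Y d \<omega> (Suc i)) a" "has_ordpat d (\<lambda>i. Y d \<omega>' (Suc i)) a"
    and qb: "has_ordpat d (Y d \<omega>) b" "has_ordpat d (Y d \<omega>') b" by (auto simp: Q_iff)
  have sp: "\<omega> \<in> space M" "\<omega>' \<in> space M" using assms(1,2) by (auto simp: Q_iff)
  show "lt (Y d \<omega>) i j = lt (Y d \<omega>') i j"
  proof (rule lt_agree[OF _ _ _ ij])
    fix i j assume "i \<le> d" "j \<le> d"
    then show "lt (Y d \<omega>) i j = lt (Y d \<omega>') i j" by (intro ordpat_rel[OF qb])
  next
    fix i j assume "i \<le> d" "j \<le> d"
    then have "lt (\<lambda>i. Y d \<omega> (Suc i)) i j = lt (\<lambda>i. Y d \<omega>' (Suc i)) i j"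
      by (intro ordpat_rel[OF qa])
    then show "lt (Y d \<omega>) (Suc i) (Suc j) = lt (Y d \<omega>') (Suc i) (Suc j)"
      by (simp add: lt_shift)
  next
    show "lt (Y d \<omega>) 0 (Suc d) = lt (Y d \<omega>') 0 (Suc d)" using assms(3) sp by (auto simp: E_def)
  qed
qed

lemma C2:
  assumes "has_ordpat (Suc d) (Y d \<omega>) r" "has_ordpat (Suc d) (Y d \<omega>') r"
    "\<omega> \<in> space M" "\<omega>' \<in> space M"
  shows "(\<omega> \<in> Q d a b \<longleftrightarrow> \<omega>' \<in> Q d a b) \<and> (\<omega> \<in> E d \<longleftrightarrow> \<omega>' \<in> E d)"
proof -
  have R: "\<And>i j. i \<le> Suc d \<Longrightarrow> j \<le> Suc d \<Longrightarrow> lt (Y d \<omega>) i j = lt (Y d \<omega>') i j"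
    using ordpat_rel[OF assms(1,2)] by blast
  have "has_ordpat d (\<lambda>i. Y d \<omega> (Suc i)) a \<longleftrightarrow> has_ordpat d (\<lambda>i. Y d \<omega>' (Suc i)) a"
  proof
    assume h: "has_ordpat d (\<lambda>i. Y d \<omega> (Suc i)) a"
    show "has_ordpat d (\<lambda>i. Y d \<omega>' (Suc i)) a" by (rule ordpat_transfer[OF h]) (simp add: lt_shift R)
  next
    assume h: "has_ordpat d (\<lambda>i. Y d \<omega>' (Suc i)) a"
    show "has_ordpat d (\<lambda>i. Y d \<omega> (Suc i)) a" by (rule ordpat_transfer[OF h]) (simp add: lt_shift R)
  qed
  moreover have "has_ordpat d (Y d \<omega>) b \<longleftrightarrow> has_ordpat d (Y d \<omega>') b"
  proof
    assume h: "has_ordpat d (Y d \<omega>) b"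
    show "has_ordpat d (Y d \<omega>') b" by (rule ordpat_transfer[OF h]) (simp add: R)
  next
    assume h: "has_ordpat d (Y d \<omega>') b"
    show "has_ordpat d (Y d \<omega>) b" by (rule ordpat_transfer[OF h]) (simp add: R)
  qed
  moreover have "lt (Y d \<omega>) 0 (Suc d) = lt (Y d \<omega>') 0 (Suc d)" using R by simp
  ultimately show ?thesis using assms(3,4) by (auto simp: Q_iff E_def)
qed

lemma amb:
  assumes "\<omega>1 \<in> Q d a b \<inter> E d" "\<omega>2 \<in> Q d a b - E d" "\<omega> \<in> Q d a b"
  shows "\<omega> \<in> V d"
proof (rule ccontr)
  have sp: "\<omega> \<in> space M" using assms(3) by (auto simp: Q_iff)
  assume "\<omega> \<notin> V d"
  then obtain j where j: "j \<in> {1..d}" and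
     bet: "(\<omega> < (T^^j) \<omega> \<and> (T^^j) \<omega> < (T^^Suc d) \<omega>) \<or> ((T^^Suc d) \<omega> < (T^^j) \<omega> \<and> (T^^j) \<omega> < \<omega>)"
    using sp unfolding V_def by auto
  define i where "i = Suc d - j"
  have i: "1 \<le> i" "i \<le> d" using j by (auto simp: i_def)
  have Yi: "Y d \<omega> i = (T^^j) \<omega>" "Y d \<omega> 0 = (T^^Suc d) \<omega>" "Y d \<omega> (Suc d) = \<omega>"
    using j by (auto simp: Y_def i_def)
  from assms have qa: "\<And>w. w \<in> {\<omega>, \<omega>1, \<omega>2} \<Longrightarrow> has_ordpat d (\<lambda>i. Y d w (Suc i)) a"
    and qb: "\<And>w. w \<in> {\<omega>, \<omega>1, \<omega>2} \<Longrightarrow> has_ordpat d (Y d w) b" by (auto simp: Q_iff)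
  obtain i' where i': "i = Suc i'" "i' \<le> d" using i by (cases i) auto
  have R1: "\<And>w. w \<in> {\<omega>1, \<omega>2} \<Longrightarrow> lt (Y d w) 0 i = lt (Y d \<omega>) 0 i"
  proof -
    fix w assume w: "w \<in> {\<omega>1, \<omega>2}"
    show "lt (Y d w) 0 i = lt (Y d \<omega>) 0 i"
      by (rule ordpat_rel[OF qb qb]) (use w i in auto)
  qed
  have R2: "\<And>w. w \<in> {\<omega>1, \<omega>2} \<Longrightarrow> lt (Y d w) i (Suc d) = lt (Y d \<omega>) i (Suc d)"
  proof -
    fix w assume w: "w \<in> {\<omega>1, \<omega>2}"
    have "lt (\<lambda>k. Y d w (Suc k)) i' d = lt (\<lambda>k. Y d \<omega> (Suc k)) i' d"
      by (rule ordpat_rel[OF qa qa]) (use w i' in auto)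
    then show "lt (Y d w) i (Suc d) = lt (Y d \<omega>) i (Suc d)" using i' by (simp add: lt_shift)
  qed
  have sp12: "\<omega>1 \<in> space M" "\<omega>2 \<in> space M" using assms by (auto simp: Q_iff)
  from bet show False
  proof
    assume "\<omega> < (T^^j) \<omega> \<and> (T^^j) \<omega> < (T^^Suc d) \<omega>"
    then have "lt (Y d \<omega>) 0 i" "lt (Y d \<omega>) i (Suc d)" using Yi by (auto simp: lt_def)
    then have "lt (Y d \<omega>2) 0 (Suc d)" using R1 R2 lt_trans by blast
    then show False using assms(2) sp12 by (auto simp: E_def)
  next
    assume "(T^^Suc d) \<omega> < (T^^j) \<omega> \<and> (T^^j) \<omega> < \<omega>"
    then have "lt (Y d \<omega>) i 0" "lt (Y d \<omega>) (Suc d) i" using Yi by (auto simp: lt_def)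
    then have "\<not> lt (Y d \<omega>) 0 i" "\<not> lt (Y d \<omega>) i (Suc d)" using lt_asym by blast+
    then have "\<not> lt (Y d \<omega>1) 0 i" "\<not> lt (Y d \<omega>1) i (Suc d)" using R1 R2 by blast+
    then have "lt (Y d \<omega>1) i 0" "lt (Y d \<omega>1) (Suc d) i"
      using lt_flip[of 0 i "Y d \<omega>1"] lt_flip[of i "Suc d" "Y d \<omega>1"] i by auto
    then have "lt (Y d \<omega>1) (Suc d) 0" using lt_trans by blast
    then show False using assms(1) sp12 lt_asym by (auto simp: E_def)
  qed
qed

end

lemma g0[simp]: "g 0 = 0" and g1[simp]: "g 1 = 0" by (simp_all add: g_def)

lemma g_split:
  fixes x y :: real assumes "0 \<le> x" "0 \<le> y"
  shows "0 \<le> g (x+y) - g x - g y" "g (x+y) - g x - g y \<le> (x+y) * ln 2"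
proof -
  have "0 \<le> g (x+y) - g x - g y \<and> g (x+y) - g x - g y \<le> (x+y) * ln 2"
  proof (cases "x = 0 \<or> y = 0")
    case True
    then show ?thesis using assms by (auto simp: g_def)
  next
    case False
    then have xp: "x > 0" and yp: "y > 0" using assms by auto
    have eq: "g (x+y) - g x - g y = x * (ln (x+y) - ln x) + y * (ln (x+y) - ln y)"
      by (simp add: g_def algebra_simps)
    have l1: "ln x \<le> ln (x+y)" "ln y \<le> ln (x+y)" using xp yp by auto
    have a: "ln ((x+y)/(2*x)) \<le> (x+y)/(2*x) - 1" using xp yp by (intro ln_le_minus_one) simp
    have b: "ln ((x+y)/(2*y)) \<le> (x+y)/(2*y) - 1" using xp yp by (intro ln_le_minus_one) simp
    have a': "ln ((x+y)/(2*x)) = ln (x+y) - ln x - ln 2" using xp yp by (simp add: ln_div ln_mult)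
    have b': "ln ((x+y)/(2*y)) = ln (x+y) - ln y - ln 2" using xp yp by (simp add: ln_div ln_mult)
    have "x * (ln (x+y) - ln x - ln 2) \<le> x * ((x+y)/(2*x) - 1)"
      using a a' xp by (intro mult_left_mono) auto
    moreover have "y * (ln (x+y) - ln y - ln 2) \<le> y * ((x+y)/(2*y) - 1)"
      using b b' yp by (intro mult_left_mono) auto
    moreover have "x * ((x+y)/(2*x) - 1) + y * ((x+y)/(2*y) - 1) = 0"
      using xp yp by (simp add: field_simps)
    ultimately have "x * (ln (x+y) - ln x) + y * (ln (x+y) - ln y) \<le> (x+y) * ln 2"
      by (simp add: algebra_simps)
    moreover have "0 \<le> x * (ln (x+y) - ln x) + y * (ln (x+y) - ln y)"
      using l1 xp yp by (intro add_nonneg_nonneg mult_nonneg_nonneg) auto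
    ultimately show ?thesis using eq by simp
  qed
  then show "0 \<le> g (x+y) - g x - g y" "g (x+y) - g x - g y \<le> (x+y) * ln 2" by auto
qed

context sys
begin

lemma idb[measurable]: "(\<lambda>x. x) \<in> borel_measurable M"
proof -
  have "(\<lambda>x. x) \<in> measurable (restrict_space borel \<Omega>) borel"
    by (rule measurable_restrict_space1) (rule measurable_ident_sets, rule refl)
  then show ?thesis by (subst measurable_cong_sets[OF Msets refl])
qed

lemma Tn_m[measurable]: "T ^^ n \<in> measurable M M"
  using Tm by (rule measurable_compose_n)

lemma Tn_b[measurable]: "(\<lambda>\<omega>. (T ^^ n) \<omega>) \<in> borel_measurable M"
  using measurable_compose[OF Tn_m idb] by simp

lemma ord_set_m[measurable]: "ord_set M T d r \<in> sets M"
proof -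
  have "Measurable.pred M (\<lambda>\<omega>. has_ordpat d (\<lambda>i. (T ^^ (d - i)) \<omega>) r)"
    unfolding has_ordpat_def by measurable
  then show ?thesis unfolding ord_set_def pred_def .
qed

lemma P_m[measurable]: "P d r \<in> sets M" unfolding P_def by measurable

lemma Q_m[measurable]: "Q d a b \<in> sets M"
  unfolding Q_def using measurable_sets[OF Tm ord_set_m] by measurable

lemma E_m[measurable]: "E d \<in> sets M"
proof -
  have "Measurable.pred M (\<lambda>\<omega>. lt (Y d \<omega>) 0 (Suc d))"
    unfolding lt_def Y_def by measurable
  then show ?thesis unfolding E_def pred_def .
qed

lemma C_m[measurable]: "C d a b e \<in> sets M"
  unfolding C_def by (cases e) auto

lemma V_m[measurable]: "V d \<in> sets M"
proof -
  have "Measurable.pred M (\<lambda>\<omega>. \<forall>j\<in>{1..d}. \<not>(\<omega> < (T^^j) \<omega> \<and> (T^^j) \<omega> < (T^^Suc d) \<omega>)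
      \<and> \<not>((T^^Suc d) \<omega> < (T^^j) \<omega> \<and> (T^^j) \<omega> < \<omega>))"
    by measurable
  then show ?thesis unfolding V_def pred_def .
qed

lemma Q_unique: "\<omega> \<in> Q d a b \<Longrightarrow> \<omega> \<in> Q d a' b' \<Longrightarrow> a = a' \<and> b = b'"
  unfolding Q_iff using ordpat_unique by blast

lemma Q_perms: "\<omega> \<in> Q d a b \<Longrightarrow> a \<in> perms_of d \<and> b \<in> perms_of d"
  unfolding Q_iff has_ordpat_def by blast

lemma in_some_Q: assumes "\<omega> \<in> space M" shows "\<exists>a b. \<omega> \<in> Q d a b"
proof -
  obtain a where "has_ordpat d (\<lambda>i. Y d \<omega> (Suc i)) a" using ordpat_exists by blast
  moreover obtain b where "has_ordpat d (Y d \<omega>) b" using ordpat_exists by blast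
  ultimately show ?thesis using assms by (auto simp: Q_iff)
qed

definition K :: "nat \<Rightarrow> ((nat list \<times> nat list) \<times> bool) set" where
  "K d = (perms_of d \<times> perms_of d) \<times> UNIV"

definition CC :: "nat \<Rightarrow> (nat list \<times> nat list) \<times> bool \<Rightarrow> real set" where
  "CC d k = C d (fst (fst k)) (snd (fst k)) (snd k)"

lemma finite_K: "finite (K d)" unfolding K_def using finite_perms by auto

lemma CC_unique: assumes "\<omega> \<in> CC d k" "\<omega> \<in> CC d k'" shows "k = k'"
proof -
  obtain a b e where k: "k = ((a,b),e)" by (metis prod.collapse)
  obtain a' b' e' where k': "k' = ((a',b'),e')" by (metis prod.collapse)
  from assms have "\<omega> \<in> Q d a b" "\<omega> \<in> Q d a' b'" by (auto simp: CC_def C_def k k')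
  then have "a = a'" "b = b'" using Q_unique by blast+
  moreover have "e = e'" using assms by (cases e; cases e') (auto simp: CC_def C_def k k')
  ultimately show ?thesis using k k' by simp
qed

lemma step1:
  assumes r: "r \<in> perms_of (Suc d)"
  shows "g (measure M (P d r)) = (\<Sum>k\<in>K d. g (measure M (P d r \<inter> CC d k)))"
proof (cases "P d r = {}")
  case True then show ?thesis by simp
next
  case False
  then obtain \<omega>0 where w0: "\<omega>0 \<in> P d r" by blast
  then have sp0: "\<omega>0 \<in> space M" and pat0: "has_ordpat (Suc d) (Y d \<omega>0) r" by (auto simp: P_iff)
  obtain a0 b0 where q0: "\<omega>0 \<in> Q d a0 b0" using in_some_Q[OF sp0] by blast
  define k0 where "k0 = ((a0, b0), \<omega>0 \<in> E d)"
  have k0K: "k0 \<in> K d" using Q_perms[OF q0] by (simp add: K_def k0_def)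
  have sub: "P d r \<subseteq> CC d k0"
  proof
    fix \<omega> assume w: "\<omega> \<in> P d r"
    then have "\<omega> \<in> space M" "has_ordpat (Suc d) (Y d \<omega>) r" by (auto simp: P_iff)
    from C2[OF pat0 this(2) sp0 this(1)] q0 show "\<omega> \<in> CC d k0"
      by (cases "\<omega>0 \<in> E d") (auto simp: CC_def C_def k0_def Q_iff E_def)
  qed
  have "(\<Sum>k\<in>K d. g (measure M (P d r \<inter> CC d k))) = g (measure M (P d r \<inter> CC d k0))"
  proof (rule sum_single[OF finite_K k0K])
    fix k assume "k \<in> K d" "k \<noteq> k0"
    then have "P d r \<inter> CC d k = {}" using sub CC_unique by blast
    then show "g (measure M (P d r \<inter> CC d k)) = 0" by simp
  qed
  also have "P d r \<inter> CC d k0 = P d r" using sub by blast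
  finally show ?thesis by simp
qed

lemma step3:
  assumes k: "k \<in> K d"
  shows "(\<Sum>r\<in>perms_of (Suc d). g (measure M (P d r \<inter> CC d k))) = g (measure M (CC d k))"
proof (cases "CC d k = {}")
  case True then show ?thesis by simp
next
  case False
  then obtain \<omega>0 where w0: "\<omega>0 \<in> CC d k" by blast
  obtain a b e where kk: "k = ((a,b),e)" by (metis prod.collapse)
  have q0: "\<omega>0 \<in> Q d a b" using w0 by (auto simp: CC_def C_def kk)
  have sp0: "\<omega>0 \<in> space M" using q0 by (auto simp: Q_iff)
  obtain r0 where pat0: "has_ordpat (Suc d) (Y d \<omega>0) r0" using ordpat_exists by blast
  have r0P: "r0 \<in> perms_of (Suc d)" using pat0 by (simp add: has_ordpat_def)
  have sub: "CC d k \<subseteq> P d r0"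
  proof
    fix \<omega> assume w: "\<omega> \<in> CC d k"
    then have q: "\<omega> \<in> Q d a b" by (auto simp: CC_def C_def kk)
    have e: "\<omega>0 \<in> E d \<longleftrightarrow> \<omega> \<in> E d" using w w0 by (cases e) (auto simp: CC_def C_def kk)
    have "has_ordpat (Suc d) (Y d \<omega>) r0" by (rule C1[OF q0 q e pat0])
    then show "\<omega> \<in> P d r0" using q by (auto simp: P_iff Q_iff)
  qed
  have "(\<Sum>r\<in>perms_of (Suc d). g (measure M (P d r \<inter> CC d k))) = g (measure M (P d r0 \<inter> CC d k))"
  proof (rule sum_single[OF finite_perms r0P])
    fix r assume "r \<in> perms_of (Suc d)" "r \<noteq> r0"
    have "P d r \<inter> CC d k = {}"
    proof (rule ccontr)
      assume "P d r \<inter> CC d k \<noteq> {}"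
      then obtain x where x: "x \<in> P d r" "x \<in> CC d k" by blast
      then have "x \<in> P d r0" using sub by blast
      then have "r = r0" using x(1) ordpat_unique by (auto simp: P_iff)
      then show False using \<open>r \<noteq> r0\<close> by simp
    qed
    then show "g (measure M (P d r \<inter> CC d k)) = 0" by simp
  qed
  also have "P d r0 \<inter> CC d k = CC d k" using sub by blast
  finally show ?thesis .
qed

lemma claimA:
  "(\<Sum>r\<in>perms_of (Suc d). g (measure M (P d r))) =
   (\<Sum>ab\<in>perms_of d \<times> perms_of d. g (measure M (C d (fst ab) (snd ab) True)) + g (measure M (C d (fst ab) (snd ab) False)))"
proof -
  have "(\<Sum>r\<in>perms_of (Suc d). g (measure M (P d r))) =
      (\<Sum>r\<in>perms_of (Suc d). \<Sum>k\<in>K d. g (measure M (P d r \<inter> CC d k)))"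
    using step1 by (intro sum.cong) auto
  also have "\<dots> = (\<Sum>k\<in>K d. \<Sum>r\<in>perms_of (Suc d). g (measure M (P d r \<inter> CC d k)))"
    by (rule sum.swap)
  also have "\<dots> = (\<Sum>k\<in>K d. g (measure M (CC d k)))"
    using step3 by (intro sum.cong) auto
  also have "\<dots> = (\<Sum>ab\<in>perms_of d \<times> perms_of d. \<Sum>e\<in>UNIV. g (measure M (CC d (ab, e))))"
    unfolding K_def by (subst sum.cartesian_product) (simp add: split_def)
  also have "\<dots> = (\<Sum>ab\<in>perms_of d \<times> perms_of d. g (measure M (C d (fst ab) (snd ab) True)) + g (measure M (C d (fst ab) (snd ab) False)))"
    by (simp add: UNIV_bool CC_def add.commute)
  finally show ?thesis .
qed

definition D :: "nat \<Rightarrow> real" where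
  "D d = sorting_entropy M T d - cond_entropy_ord M T d"

definition trm :: "nat \<Rightarrow> nat list \<times> nat list \<Rightarrow> real" where
  "trm d ab = g (measure M (Q d (fst ab) (snd ab))) - g (measure M (C d (fst ab) (snd ab) True))
      - g (measure M (C d (fst ab) (snd ab) False))"

lemma D_eq: "D d = (\<Sum>ab\<in>perms_of d \<times> perms_of d. trm d ab)"
proof -
  have h1: "H_ord M T (Suc d) = - (\<Sum>r\<in>perms_of (Suc d). g (measure M (P d r)))"
    unfolding H_ord_def part_entropy_def g_def P_def ..
  have h2: "H_ord2 M T d = - (\<Sum>ab\<in>perms_of d \<times> perms_of d. g (measure M (Q d (fst ab) (snd ab))))"
    unfolding H_ord2_def part_entropy_def g_def Q_def by (simp add: split_def)
  show ?thesis
    unfolding D_def sorting_entropy_def cond_entropy_ord_def h1 h2 claimA trm_def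
    by (simp add: sum_subtractf sum.distrib)
qed

lemma trm_bounds:
  "0 \<le> trm d ab \<and> trm d ab \<le> ln 2 * measure M (Q d (fst ab) (snd ab) \<inter> V d)"
proof -
  obtain a b where ab: "ab = (a,b)" by (metis prod.collapse)
  let ?x = "measure M (C d a b True)" and ?y = "measure M (C d a b False)"
  have CT: "C d a b True = Q d a b \<inter> E d" and CF: "C d a b False = Q d a b - E d"
    using Q_iff by (auto simp: C_def)
  have "Q d a b = C d a b True \<union> C d a b False" "C d a b True \<inter> C d a b False = {}"
    unfolding CT CF by auto
  then have mQ: "measure M (Q d a b) = ?x + ?y"
    using finite_measure_Union[of "C d a b True" "C d a b False"] by simp
  have t: "trm d ab = g (?x + ?y) - g ?x - g ?y" using mQ by (simp add: trm_def ab)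
  have b1: "0 \<le> trm d ab" "trm d ab \<le> (?x + ?y) * ln 2" unfolding t by (intro g_split; simp)+
  have "trm d ab \<le> ln 2 * measure M (Q d a b \<inter> V d)"
  proof (cases "?x = 0 \<or> ?y = 0")
    case True
    then have "trm d ab = 0" unfolding t by (auto simp: g_def)
    then show ?thesis by simp
  next
    case False
    then have "C d a b True \<noteq> {}" "C d a b False \<noteq> {}" by auto
    then obtain \<omega>1 \<omega>2 where "\<omega>1 \<in> Q d a b \<inter> E d" "\<omega>2 \<in> Q d a b - E d" unfolding CT CF by blast
    then have "Q d a b \<subseteq> V d" using amb by blast
    then have "Q d a b \<inter> V d = Q d a b" by blast
    then show ?thesis using b1 mQ by (simp add: mult.commute)
  qed
  then show ?thesis using b1 ab by simp
qed

lemma D_bounds: "0 \<le> D d \<and> D d \<le> ln 2 * measure M (V d)"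
proof -
  let ?S = "perms_of d \<times> perms_of d"
  have fin: "finite ?S" using finite_perms by auto
  have "0 \<le> D d" unfolding D_eq using trm_bounds by (intro sum_nonneg) auto
  moreover have "D d \<le> (\<Sum>ab\<in>?S. ln 2 * measure M (Q d (fst ab) (snd ab) \<inter> V d))"
    unfolding D_eq using trm_bounds by (intro sum_mono) auto
  moreover have "(\<Sum>ab\<in>?S. measure M (Q d (fst ab) (snd ab) \<inter> V d))
        = measure M (\<Union>ab\<in>?S. Q d (fst ab) (snd ab) \<inter> V d)"
  proof (rule finite_measure_finite_Union[symmetric, OF fin])
    show "(\<lambda>ab. Q d (fst ab) (snd ab) \<inter> V d) ` ?S \<subseteq> sets M" by auto
    show "disjoint_family_on (\<lambda>ab. Q d (fst ab) (snd ab) \<inter> V d) ?S"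
      unfolding disjoint_family_on_def using Q_unique by (auto simp: prod_eq_iff)
  qed
  moreover have "measure M (\<Union>ab\<in>?S. Q d (fst ab) (snd ab) \<inter> V d) \<le> measure M (V d)"
    by (rule finite_measure_mono) auto
  ultimately have h: "0 \<le> D d" "D d \<le> ln 2 * measure M (\<Union>ab\<in>?S. Q d (fst ab) (snd ab) \<inter> V d)"
     "measure M (\<Union>ab\<in>?S. Q d (fst ab) (snd ab) \<inter> V d) \<le> measure M (V d)"
    by (simp_all add: sum_distrib_left[symmetric])
  have "ln 2 * measure M (\<Union>ab\<in>?S. Q d (fst ab) (snd ab) \<inter> V d) \<le> ln 2 * measure M (V d)"
    using h(3) by (intro mult_left_mono) auto
  then show ?thesis using h by linarith
qed

lemma D_dirac:
  assumes "\<And>A. A \<in> sets M \<Longrightarrow> measure M A = 0 \<or> measure M A = 1"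
  shows "D d = 0"
proof -
  have "\<And>ab. ab \<in> perms_of d \<times> perms_of d \<Longrightarrow> trm d ab = 0"
  proof -
    fix ab
    have "g (measure M (Q d (fst ab) (snd ab))) = 0" using assms[OF Q_m[of d "fst ab" "snd ab"]] by auto
    moreover have "g (measure M (C d (fst ab) (snd ab) e)) = 0" for e
      using assms[OF C_m[of d "fst ab" "snd ab" e]] by auto
    ultimately show "trm d ab = 0" by (simp add: trm_def)
  qed
  then show ?thesis unfolding D_eq by simp
qed

end

lemma find_cut:
  fixes c :: "nat \<Rightarrow> real"
  shows "c 0 < u \<Longrightarrow> u \<le> c n \<Longrightarrow> \<exists>p<n. c p < u \<and> u \<le> c (Suc p)"
proof (induction n)
  case 0 then show ?case by simp
next
  case (Suc n)
  show ?case
  proof (cases "u \<le> c n")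
    case True then show ?thesis using Suc by (meson less_SucI)
  next
    case False then show ?thesis using Suc by (intro exI[of _ n]) auto
  qed
qed

lemma cut_cases:
  fixes c :: "nat \<Rightarrow> real"
  assumes mono: "\<And>k l. k < l \<Longrightarrow> l \<le> n \<Longrightarrow> c k < c l" and n2: "2 \<le> n"
    and "c 0 < u" "u \<le> v" "v \<le> c n"
  shows "(\<exists>j. Suc j \<le> n \<and> u \<le> c j \<and> c (Suc j) < v) \<or> (\<exists>k. k + 2 \<le> n \<and> c k < u \<and> v \<le> c (k+2))"
proof -
  obtain p where p: "p < n" "c p < u" "u \<le> c (Suc p)" using find_cut[of c u n] assms by force
  show ?thesis
  proof (cases "Suc (Suc p) \<le> n")
    case True
    show ?thesis
    proof (cases "c (Suc (Suc p)) < v")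
      case True
      then show ?thesis using p \<open>Suc (Suc p) \<le> n\<close> by (intro disjI1 exI[of _ "Suc p"]) auto
    next
      case False
      then show ?thesis using p \<open>Suc (Suc p) \<le> n\<close> by (intro disjI2 exI[of _ p]) (auto simp: numeral_2_eq_2)
    qed
  next
    case False
    then have pn: "Suc p = n" using p by simp
    then have p1: "p \<ge> 1" using n2 by simp
    have "c (p - 1) < c p" using mono[of "p-1" p] p1 p by simp
    moreover have "p - 1 + 2 = Suc p" using p1 by simp
    ultimately show ?thesis using p pn assms(5) p1
      by (intro disjI2 exI[of _ "p - 1"]) auto
  qed
qed

locale mix = sys +
  assumes mixing: "\<forall>A\<in>sets M. \<forall>B\<in>sets M.
           (\<lambda>n. measure M ((T ^^ n) -` A \<inter> space M \<inter> B)) \<longlonglongrightarrow> measure M A * measure M B"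
begin

lemma Tn_space: "\<omega> \<in> space M \<Longrightarrow> (T ^^ n) \<omega> \<in> space M"
  using measurable_space[OF Tn_m] .

lemma inv_n: assumes "B \<in> sets M" shows "measure M ((T ^^ n) -` B \<inter> space M) = measure M B"
proof (induction n)
  case 0
  have "(T ^^ 0) -` B \<inter> space M = B" using sets.sets_into_space[OF assms] by auto
  then show ?case by simp
next
  case (Suc n)
  have eq: "(T ^^ Suc n) -` B \<inter> space M = T -` ((T ^^ n) -` B \<inter> space M) \<inter> space M"
    using T_space by (auto simp del: funpow.simps simp add: funpow_Suc_right)
  have m: "(T ^^ n) -` B \<inter> space M \<in> sets M" using measurable_sets[OF Tn_m assms] .
  have "measure M ((T ^^ Suc n) -` B \<inter> space M) = measure M (T -` ((T ^^ n) -` B \<inter> space M) \<inter> space M)"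
    by (simp only: eq)
  also have "\<dots> = measure M ((T ^^ n) -` B \<inter> space M)" using Tinv m by blast
  also have "\<dots> = measure M B" by (rule Suc.IH)
  finally show ?case .
qed

definition N :: "nat \<Rightarrow> real set \<Rightarrow> real set" where
  "N d A = {\<omega>\<in>space M. \<forall>j\<in>{1..d}. (T^^j) \<omega> \<notin> A}"

lemma N_m: assumes "A \<in> sets M" shows "N d A \<in> sets M"
proof -
  have "N d A = space M - (\<Union>j\<in>{1..d}. (T^^j) -` A \<inter> space M)" unfolding N_def by auto
  moreover have "(\<Union>j\<in>{1..d}. (T^^j) -` A \<inter> space M) \<in> sets M"
    using measurable_sets[OF Tn_m assms] by (intro sets.finite_UN) auto
  ultimately show ?thesis by auto
qed

lemma N_lim: assumes A: "A \<in> sets M" "measure M A > 0"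
  shows "(\<lambda>d. measure M (N d A)) \<longlonglongrightarrow> 0"
proof -
  have dec: "decseq (\<lambda>d. N d A)" by (rule decseq_SucI) (auto simp: N_def)
  have rng: "range (\<lambda>d. N d A) \<subseteq> sets M" using N_m[OF A(1)] by auto
  define B where "B = (\<Inter>d. N d A)"
  have L: "(\<lambda>d. measure M (N d A)) \<longlonglongrightarrow> measure M B"
    unfolding B_def by (rule finite_Lim_measure_decseq[OF rng dec])
  have Bm: "B \<in> sets M" unfolding B_def using rng by (intro sets.countable_INT') auto
  have emp: "(T ^^ Suc n) -` A \<inter> space M \<inter> B = {}" for n
  proof -
    have "x \<in> N (Suc n) A \<Longrightarrow> (T^^Suc n) x \<notin> A" for x
      unfolding N_def by (auto simp del: funpow.simps)
    then show ?thesis unfolding B_def by blast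
  qed
  have "(\<lambda>n. measure M ((T ^^ n) -` A \<inter> space M \<inter> B)) \<longlonglongrightarrow> measure M A * measure M B"
    using mixing A(1) Bm by blast
  then have "(\<lambda>n. measure M ((T ^^ Suc n) -` A \<inter> space M \<inter> B)) \<longlonglongrightarrow> measure M A * measure M B"
    by (rule LIMSEQ_Suc)
  then have "(\<lambda>n. 0::real) \<longlonglongrightarrow> measure M A * measure M B" using emp by simp
  then have "measure M A * measure M B = 0" using LIMSEQ_unique tendsto_const by blast
  then have "measure M B = 0" using A(2) by simp
  then show ?thesis using L by simp
qed

lemma mix_shift: assumes "A \<in> sets M" "B \<in> sets M"
  shows "(\<lambda>d. measure M ((T ^^ Suc d) -` A \<inter> space M \<inter> B)) \<longlonglongrightarrow> measure M A * measure M B"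
  using mixing assms by (intro LIMSEQ_Suc) blast

definition F :: "real \<Rightarrow> real" where "F t = measure M {\<omega>\<in>space M. \<omega> \<le> t}"

lemma le_m[measurable]: "{\<omega>\<in>space M. \<omega> \<le> t} \<in> sets M" by measurable

lemma F_mono: "s \<le> t \<Longrightarrow> F s \<le> F t"
  unfolding F_def by (rule finite_measure_mono) auto

lemma Iv_measure: assumes "s \<le> t"
  shows "measure M {\<omega>\<in>space M. s < \<omega> \<and> \<omega> \<le> t} = F t - F s"
proof -
  have "{\<omega>\<in>space M. s < \<omega> \<and> \<omega> \<le> t} = {\<omega>\<in>space M. \<omega> \<le> t} - {\<omega>\<in>space M. \<omega> \<le> s}"
    using assms by auto
  then show ?thesis unfolding F_def using assms
    by (simp add: finite_measure_Diff subset_eq)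
qed

lemma gt_measure: "measure M {\<omega>\<in>space M. t < \<omega>} = 1 - F t"
proof -
  have "{\<omega>\<in>space M. t < \<omega>} = space M - {\<omega>\<in>space M. \<omega> \<le> t}" by auto
  then show ?thesis unfolding F_def using prob_space
    by (simp add: finite_measure_Diff subset_eq)
qed

lemma F_cont:
  assumes na: "\<And>p. measure M {p} = 0"
  shows "isCont F x" "(F \<longlongrightarrow> 0) at_bot" "(F \<longlongrightarrow> 1) at_top"
proof -
  let ?M' = "distr M borel (\<lambda>x. x)"
  interpret M': real_distribution ?M'
    by (rule real_distribution.intro[OF prob_space_distr[OF idb]]) (unfold_locales, simp)
  have FF: "F = cdf ?M'"
  proof
    fix t
    have "cdf ?M' t = measure M ((\<lambda>x. x) -` {..t} \<inter> space M)"
      unfolding cdf_def by (rule measure_distr[OF idb]) simp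
    also have "(\<lambda>x. x) -` {..t} \<inter> space M = {\<omega>\<in>space M. \<omega> \<le> t}" by auto
    finally show "F t = cdf ?M' t" by (simp add: F_def)
  qed
  have "measure ?M' {x} = measure M ((\<lambda>x. x) -` {x} \<inter> space M)"
    by (rule measure_distr[OF idb]) simp
  also have "\<dots> = 0"
    using na[of x] by (cases "x \<in> space M") (auto simp: Int_absorb2 vimage_def)
  finally show "isCont F x" unfolding FF using M'.isCont_cdf by simp
  show "(F \<longlongrightarrow> 0) at_bot" unfolding FF by (rule M'.cdf_lim_at_bot)
  show "(F \<longlongrightarrow> 1) at_top" unfolding FF by (rule M'.cdf_lim_at_top_prob)
qed

lemma F_ivt:
  assumes na: "\<And>p. measure M {p} = 0" and y: "0 < y" "y < 1"
  shows "\<exists>t. F t = y"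
proof -
  have "eventually (\<lambda>t. F t < y) at_bot" using order_tendstoD(2)[OF F_cont(2)[OF na] y(1)] .
  then obtain A where A: "\<And>t. t \<le> A \<Longrightarrow> F t < y" by (auto simp: eventually_at_bot_linorder)
  have "eventually (\<lambda>t. y < F t) at_top" using order_tendstoD(1)[OF F_cont(3)[OF na] y(2)] .
  then obtain B where B: "\<And>t. t \<ge> B \<Longrightarrow> y < F t" by (auto simp: eventually_at_top_linorder)
  have "\<exists>x. min A B \<le> x \<and> x \<le> max A B \<and> F x = y"
    using A[of "min A B"] B[of "max A B"] F_cont(1)[OF na]
    by (intro IVT) auto
  then show ?thesis by blast
qed

lemma cuts_exist:
  assumes na: "\<And>p. measure M {p} = 0"
  shows "\<exists>c. \<forall>k\<le>n. F (c k) = (real k + 1) / (real n + 2)"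
proof -
  have "\<forall>k. \<exists>t. k \<le> n \<longrightarrow> F t = (real k + 1) / (real n + 2)"
  proof
    fix k
    show "\<exists>t. k \<le> n \<longrightarrow> F t = (real k + 1) / (real n + 2)"
    proof (cases "k \<le> n")
      case True
      then have "0 < (real k + 1) / (real n + 2)" "(real k + 1) / (real n + 2) < 1" by auto
      then show ?thesis using F_ivt[OF na] by blast
    qed simp
  qed
  then show ?thesis by metis
qed

end

context mix
begin

definition Iv :: "real \<Rightarrow> real \<Rightarrow> real set" where
  "Iv s t = {\<omega>\<in>space M. s < \<omega> \<and> \<omega> \<le> t}"

lemma Iv_m[measurable]: "Iv s t \<in> sets M" unfolding Iv_def by measurable

lemma gt_m[measurable]: "{\<omega>\<in>space M. t < \<omega>} \<in> sets M" by measurable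

lemma V_cover:
  fixes c :: "nat \<Rightarrow> real"
  assumes monoA: "\<forall>k l. k < l \<and> l \<le> n \<longrightarrow> c k < c l" and n2: "2 \<le> n"
    and w: "\<omega> \<in> V d"
  shows "\<omega> \<in> {\<omega>\<in>space M. \<omega> \<le> c 0} \<or> \<omega> \<in> {\<omega>\<in>space M. c n < \<omega>}
     \<or> \<omega> \<in> ((T^^Suc d) -` {\<omega>\<in>space M. \<omega> \<le> c 0} \<inter> space M)
     \<or> \<omega> \<in> ((T^^Suc d) -` {\<omega>\<in>space M. c n < \<omega>} \<inter> space M)
     \<or> (\<exists>j<n. \<omega> \<in> N d (Iv (c j) (c (Suc j))))
     \<or> (\<exists>k<n-1. \<omega> \<in> (T^^Suc d) -` Iv (c k) (c (k+2)) \<inter> space M \<inter> Iv (c k) (c (k+2)))"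
proof -
  have mono: "\<And>k l. k < l \<Longrightarrow> l \<le> n \<Longrightarrow> c k < c l" using monoA by blast
  have sp: "\<omega> \<in> space M" using w by (simp add: V_def)
  define t where "t = (T^^Suc d) \<omega>"
  have tsp: "t \<in> space M" unfolding t_def using Tn_space[OF sp] .
  have V1: "\<And>j. j \<in> {1..d} \<Longrightarrow> \<not>(\<omega> < (T^^j) \<omega> \<and> (T^^j) \<omega> < t)"
    and V2: "\<And>j. j \<in> {1..d} \<Longrightarrow> \<not>(t < (T^^j) \<omega> \<and> (T^^j) \<omega> < \<omega>)"
    using w unfolding V_def t_def by blast+
  have Nj: "\<omega> \<in> N d (Iv (c j) (c (Suc j)))"
    if j: "(\<omega> \<le> c j \<and> c (Suc j) < t) \<or> (t \<le> c j \<and> c (Suc j) < \<omega>)" for j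
  proof -
    have "\<forall>j'\<in>{1..d}. (T^^j') \<omega> \<notin> Iv (c j) (c (Suc j))"
    proof (intro ballI notI)
      fix j' assume j': "j' \<in> {1..d}" "(T^^j') \<omega> \<in> Iv (c j) (c (Suc j))"
      then have y: "c j < (T^^j') \<omega>" "(T^^j') \<omega> \<le> c (Suc j)" by (auto simp: Iv_def)
      from j show False
      proof
        assume "\<omega> \<le> c j \<and> c (Suc j) < t"
        then have "\<omega> < (T^^j') \<omega> \<and> (T^^j') \<omega> < t" using y by linarith
        then show False using V1[OF j'(1)] by blast
      next
        assume "t \<le> c j \<and> c (Suc j) < \<omega>"
        then have "t < (T^^j') \<omega> \<and> (T^^j') \<omega> < \<omega>" using y by linarith
        then show False using V2[OF j'(1)] by blast
      qed
    qed
    then show ?thesis unfolding N_def using sp by blast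
  qed
  have Dk: "\<omega> \<in> (T^^Suc d) -` Iv (c k) (c (k+2)) \<inter> space M \<inter> Iv (c k) (c (k+2))"
    if "c k < \<omega>" "\<omega> \<le> c (k+2)" "c k < t" "t \<le> c (k+2)" for k
    using that sp tsp unfolding Iv_def t_def by simp
  show ?thesis
  proof (cases "\<omega> \<le> c 0 \<or> c n < \<omega> \<or> t \<le> c 0 \<or> c n < t")
    case True
    then show ?thesis using sp tsp unfolding t_def by auto
  next
    case False
    then have b: "c 0 < \<omega>" "\<omega> \<le> c n" "c 0 < t" "t \<le> c n" by auto
    show ?thesis
    proof (cases "\<omega> \<le> t")
      case True
      from cut_cases[OF mono n2 b(1) True b(4)] show ?thesis
      proof
        assume "\<exists>j. Suc j \<le> n \<and> \<omega> \<le> c j \<and> c (Suc j) < t"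
        then obtain j where j: "Suc j \<le> n" "\<omega> \<le> c j" "c (Suc j) < t" by blast
        have "j < n" using j by simp
        then show ?thesis using Nj[of j] j by blast
      next
        assume "\<exists>k. k + 2 \<le> n \<and> c k < \<omega> \<and> t \<le> c (k+2)"
        then obtain k where k: "k + 2 \<le> n" "c k < \<omega>" "t \<le> c (k+2)" by blast
        have "c k < t" "\<omega> \<le> c (k+2)" using k True by auto
        then have "\<omega> \<in> (T^^Suc d) -` Iv (c k) (c (k+2)) \<inter> space M \<inter> Iv (c k) (c (k+2))"
          using Dk k by blast
        moreover have "k < n - 1" using k by simp
        ultimately show ?thesis by blast
      qed
    next
      case False
      then have tw: "t \<le> \<omega>" by simp
      from cut_cases[OF mono n2 b(3) tw b(2)] show ?thesis
      proof
        assume "\<exists>j. Suc j \<le> n \<and> t \<le> c j \<and> c (Suc j) < \<omega>"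
        then obtain j where j: "Suc j \<le> n" "t \<le> c j" "c (Suc j) < \<omega>" by blast
        have "j < n" using j by simp
        then show ?thesis using Nj[of j] j by blast
      next
        assume "\<exists>k. k + 2 \<le> n \<and> c k < t \<and> \<omega> \<le> c (k+2)"
        then obtain k where k: "k + 2 \<le> n" "c k < t" "\<omega> \<le> c (k+2)" by blast
        have "c k < \<omega>" "t \<le> c (k+2)" using k tw by auto
        then have "\<omega> \<in> (T^^Suc d) -` Iv (c k) (c (k+2)) \<inter> space M \<inter> Iv (c k) (c (k+2))"
          using Dk k by blast
        moreover have "k < n - 1" using k by simp
        ultimately show ?thesis by blast
      qed
    qed
  qed
qed

lemma V_bound:
  fixes c :: "nat \<Rightarrow> real"
  assumes monoA: "\<forall>k l. k < l \<and> l \<le> n \<longrightarrow> c k < c l" and n2: "2 \<le> n"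
  shows "measure M (V d) \<le> 2 * (measure M {\<omega>\<in>space M. \<omega> \<le> c 0} + measure M {\<omega>\<in>space M. c n < \<omega>})
     + (\<Sum>j<n. measure M (N d (Iv (c j) (c (Suc j)))))
     + (\<Sum>k<n-1. measure M ((T^^Suc d) -` Iv (c k) (c (k+2)) \<inter> space M \<inter> Iv (c k) (c (k+2))))"
proof -
  let ?Lo = "{\<omega>\<in>space M. \<omega> \<le> c 0}" and ?Hi = "{\<omega>\<in>space M. c n < \<omega>}"
  let ?A = "(T^^Suc d) -` ?Lo \<inter> space M" and ?B = "(T^^Suc d) -` ?Hi \<inter> space M"
  let ?NN = "\<Union>j<n. N d (Iv (c j) (c (Suc j)))"
  let ?DD = "\<Union>k<n-1. (T^^Suc d) -` Iv (c k) (c (k+2)) \<inter> space M \<inter> Iv (c k) (c (k+2))"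
  have mA: "?A \<in> sets M" "?B \<in> sets M"
    by (rule measurable_sets[OF Tn_m le_m], rule measurable_sets[OF Tn_m gt_m])
  have mN: "?NN \<in> sets M" using N_m by (intro sets.finite_UN) auto
  have pre: "\<And>a b. (T^^Suc d) -` Iv a b \<inter> space M \<inter> Iv a b \<in> sets M"
    by (rule sets.Int[OF measurable_sets[OF Tn_m Iv_m] Iv_m])
  have mD: "?DD \<in> sets M" using pre by (intro sets.finite_UN) auto
  have "V d \<subseteq> ?Lo \<union> ?Hi \<union> ?A \<union> ?B \<union> ?NN \<union> ?DD"
  proof
    fix \<omega> assume "\<omega> \<in> V d"
    from V_cover[OF monoA n2 this] show "\<omega> \<in> ?Lo \<union> ?Hi \<union> ?A \<union> ?B \<union> ?NN \<union> ?DD"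
      by (elim disjE exE conjE) (simp_all only: Un_iff UN_iff lessThan_iff, blast+)
  qed
  then have "measure M (V d) \<le> measure M (?Lo \<union> ?Hi \<union> ?A \<union> ?B \<union> ?NN \<union> ?DD)"
    using mA mN mD by (intro finite_measure_mono) auto
  also have "\<dots> \<le> measure M (?Lo \<union> ?Hi \<union> ?A \<union> ?B \<union> ?NN) + measure M ?DD"
    using mA mN mD by (intro measure_Un_le) auto
  also have "measure M (?Lo \<union> ?Hi \<union> ?A \<union> ?B \<union> ?NN) \<le> measure M (?Lo \<union> ?Hi \<union> ?A \<union> ?B) + measure M ?NN"
    using mA mN by (intro measure_Un_le) auto
  also have "measure M (?Lo \<union> ?Hi \<union> ?A \<union> ?B) \<le> measure M (?Lo \<union> ?Hi \<union> ?A) + measure M ?B"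
    using mA by (intro measure_Un_le) auto
  also have "measure M (?Lo \<union> ?Hi \<union> ?A) \<le> measure M (?Lo \<union> ?Hi) + measure M ?A"
    using mA by (intro measure_Un_le) auto
  also have "measure M (?Lo \<union> ?Hi) \<le> measure M ?Lo + measure M ?Hi"
    by (intro measure_Un_le) auto
  also have "measure M ?A = measure M ?Lo" by (rule inv_n) simp
  also have "measure M ?B = measure M ?Hi" by (rule inv_n) simp
  also have "measure M ?NN \<le> (\<Sum>j<n. measure M (N d (Iv (c j) (c (Suc j)))))"
    using N_m by (intro finite_measure_subadditive_finite) auto
  also have "measure M ?DD \<le> (\<Sum>k<n-1. measure M ((T^^Suc d) -` Iv (c k) (c (k+2)) \<inter> space M \<inter> Iv (c k) (c (k+2))))"
    using pre by (intro finite_measure_subadditive_finite) auto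
  finally show ?thesis by simp
qed

lemma V_eventually:
  assumes na: "\<And>p. measure M {p} = 0" and n2: "2 \<le> n"
  shows "eventually (\<lambda>d. measure M (V d) < 9 / (real n + 2)) sequentially"
proof -
  obtain c where c: "\<And>k. k \<le> n \<Longrightarrow> F (c k) = (real k + 1) / (real n + 2)"
    using cuts_exist[OF na, of n] by blast
  have mono: "c k < c l" if "k < l" "l \<le> n" for k l
  proof (rule ccontr)
    assume "\<not> c k < c l"
    then have "F (c l) \<le> F (c k)" by (intro F_mono) simp
    moreover have "(real k + 1) / (real n + 2) < (real l + 1) / (real n + 2)"
      using that by (intro divide_strict_right_mono) auto
    ultimately show False using c[of k] c[of l] that by simp
  qed
  have monoA: "\<forall>k l. k < l \<and> l \<le> n \<longrightarrow> c k < c l" using mono by blast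
  define h where "h = 1 / (real n + 2)"
  have hp: "h > 0" unfolding h_def by simp
  have mLo: "measure M {\<omega>\<in>space M. \<omega> \<le> c 0} = h" using c[of 0] unfolding F_def h_def by simp
  have mHi: "measure M {\<omega>\<in>space M. c n < \<omega>} = h"
  proof -
    have "measure M {\<omega>\<in>space M. c n < \<omega>} = 1 - (real n + 1) / (real n + 2)"
      using c[of n] gt_measure[of "c n"] by simp
    also have "\<dots> = h" unfolding h_def by (simp add: field_simps)
    finally show ?thesis .
  qed
  have mI: "measure M (Iv (c j) (c (Suc j))) = h" if "j < n" for j
  proof -
    have "c j \<le> c (Suc j)" using mono[of j "Suc j"] that by simp
    then have "measure M (Iv (c j) (c (Suc j))) = F (c (Suc j)) - F (c j)"
      unfolding Iv_def by (rule Iv_measure)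
    also have "\<dots> = h" using c[of j] c[of "Suc j"] that unfolding h_def by (simp add: field_simps)
    finally show ?thesis .
  qed
  have mD: "measure M (Iv (c k) (c (k+2))) = 2 * h" if "k < n - 1" for k
  proof -
    have k2: "k + 2 \<le> n" using that by linarith
    have "c k \<le> c (k+2)" using mono[of k "k+2"] k2 by simp
    then have "measure M (Iv (c k) (c (k+2))) = F (c (k+2)) - F (c k)"
      unfolding Iv_def by (rule Iv_measure)
    also have "\<dots> = 2 * h" using c[of k] c[of "k+2"] k2 unfolding h_def by (simp add: field_simps)
    finally show ?thesis .
  qed
  let ?R = "\<lambda>d. 2 * (h + h) + (\<Sum>j<n. measure M (N d (Iv (c j) (c (Suc j)))))
     + (\<Sum>k<n-1. measure M ((T^^Suc d) -` Iv (c k) (c (k+2)) \<inter> space M \<inter> Iv (c k) (c (k+2))))"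
  have bound: "measure M (V d) \<le> ?R d" for d
    using V_bound[OF monoA n2, of d] mLo mHi by simp
  have lim: "?R \<longlonglongrightarrow> 2 * (h + h) + (\<Sum>j<n. 0) + (\<Sum>k<n-1. (2*h) * (2*h))"
  proof (intro tendsto_add tendsto_const tendsto_sum)
    fix j assume "j \<in> {..<n}"
    then show "(\<lambda>d. measure M (N d (Iv (c j) (c (Suc j))))) \<longlonglongrightarrow> 0"
      using mI[of j] hp by (intro N_lim) auto
  next
    fix k assume k: "k \<in> {..<n-1}"
    have "(\<lambda>d. measure M ((T^^Suc d) -` Iv (c k) (c (k+2)) \<inter> space M \<inter> Iv (c k) (c (k+2))))
       \<longlonglongrightarrow> measure M (Iv (c k) (c (k+2))) * measure M (Iv (c k) (c (k+2)))"
      by (intro mix_shift) auto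
    then show "(\<lambda>d. measure M ((T^^Suc d) -` Iv (c k) (c (k+2)) \<inter> space M \<inter> Iv (c k) (c (k+2))))
       \<longlonglongrightarrow> (2*h) * (2*h)" using mD[of k] k by simp
  qed
  have val: "2 * (h + h) + (\<Sum>j<n. 0::real) + (\<Sum>k<n-1. (2*h) * (2*h)) < 9 / (real n + 2)"
  proof -
    have "(\<Sum>k<n-1. (2*h) * (2*h)) = real (n - 1) * (4 * h * h)" by simp
    also have "\<dots> \<le> (real n + 2) * (4 * h * h)" using hp by (intro mult_right_mono) auto
    also have "\<dots> = 4 * h * ((real n + 2) * h)" by (simp add: algebra_simps)
    also have "(real n + 2) * h = 1" unfolding h_def by simp
    finally have "(\<Sum>k<n-1. (2*h) * (2*h)) \<le> 4 * h" by simp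
    moreover have "9 / (real n + 2) = 9 * h" unfolding h_def by simp
    ultimately show ?thesis using hp by simp
  qed
  have "eventually (\<lambda>d. ?R d < 9 / (real n + 2)) sequentially"
    using order_tendstoD(2)[OF lim val] .
  then show ?thesis
    by eventually_elim (use bound in \<open>auto intro: le_less_trans\<close>)
qed

lemma V_lim:
  assumes na: "\<And>p. measure M {p} = 0"
  shows "(\<lambda>d. measure M (V d)) \<longlonglongrightarrow> 0"
proof (rule order_tendstoI)
  fix a :: real assume "a < 0"
  then show "eventually (\<lambda>d. a < measure M (V d)) sequentially"
    by (intro always_eventually) (auto intro: less_le_trans[OF _ measure_nonneg])
next
  fix a :: real assume a: "0 < a"
  define n where "n = nat \<lceil>9 / a\<rceil> + 2"
  have n2: "2 \<le> n" unfolding n_def by simp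
  have "9 / a \<le> real (nat \<lceil>9 / a\<rceil>)" by linarith
  then have "9 / a < real n + 2" unfolding n_def by simp
  then have lt9: "9 / (real n + 2) < a" using a by (simp add: field_simps)
  show "eventually (\<lambda>d. measure M (V d) < a) sequentially"
    by (rule eventually_mono[OF V_eventually[OF na n2]]) (use lt9 in linarith)
qed

end

context mix
begin

lemma atom_dirac:
  assumes mp: "measure M {p} > 0"
  shows "\<And>A. A \<in> sets M \<Longrightarrow> measure M A = 0 \<or> measure M A = 1"
proof -
  define m where "m = measure M {p}"
  have mpos: "m > 0" using mp by (simp add: m_def)
  have pm: "{p} \<in> sets M" using mp measure_notin_sets by fastforce
  have psp: "p \<in> space M" using sets.sets_into_space[OF pm] by simp
  have seq: "measure M ((T ^^ n) -` {p} \<inter> space M \<inter> {p}) = (if (T ^^ n) p = p then m else 0)" for n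
  proof (cases "(T ^^ n) p = p")
    case True
    then have "(T ^^ n) -` {p} \<inter> space M \<inter> {p} = {p}" using psp by auto
    then show ?thesis using True by (simp add: m_def)
  next
    case False
    then have "(T ^^ n) -` {p} \<inter> space M \<inter> {p} = {}" by auto
    then show ?thesis using False by simp
  qed
  have L0: "(\<lambda>n. measure M ((T ^^ n) -` {p} \<inter> space M \<inter> {p})) \<longlonglongrightarrow> m * m"
    unfolding m_def using mixing pm by blast
  have L: "(\<lambda>n. if (T ^^ n) p = p then m else 0) \<longlonglongrightarrow> m * m"
    using L0 unfolding seq .
  have "eventually (\<lambda>n. 0 < (if (T ^^ n) p = p then m else 0)) sequentially"
    using order_tendstoD(1)[OF L] mpos by simp
  then obtain N where N: "\<And>n. n \<ge> N \<Longrightarrow> 0 < (if (T ^^ n) p = p then m else 0)"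
    by (auto simp: eventually_sequentially)
  have fixN: "\<And>n. n \<ge> N \<Longrightarrow> (T ^^ n) p = p"
    using N by (metis less_irrefl)
  have "T p = p"
  proof -
    have "(T ^^ Suc N) p = T ((T ^^ N) p)" by simp
    then show ?thesis using fixN[of N] fixN[of "Suc N"] by simp
  qed
  then have fixall: "(T ^^ n) p = p" for n by (induction n) auto
  have "(\<lambda>n. m) \<longlonglongrightarrow> m * m" using L fixall by simp
  then have "m = m * m" using LIMSEQ_unique tendsto_const by blast
  then have m1: "m = 1" using mpos by simp
  fix A assume A: "A \<in> sets M"
  show "measure M A = 0 \<or> measure M A = 1"
  proof (cases "p \<in> A")
    case True
    then have "m \<le> measure M A" unfolding m_def using A by (intro finite_measure_mono) auto
    then show ?thesis using m1 prob_le_1[of A] by simp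
  next
    case False
    then have "A \<subseteq> space M - {p}" using sets.sets_into_space[OF A] by blast
    then have "measure M A \<le> measure M (space M - {p})" by (intro finite_measure_mono) (auto simp: pm)
    also have "\<dots> = 1 - m" using pm psp prob_space by (simp add: finite_measure_Diff m_def)
    finally show ?thesis using m1 measure_nonneg[of M A] by simp
  qed
qed

lemma D_lim: "D \<longlonglongrightarrow> 0"
proof (cases "\<exists>p. measure M {p} > 0")
  case True
  then obtain p where "measure M {p} > 0" by blast
  then have "D d = 0" for d using D_dirac atom_dirac by blast
  then have "D = (\<lambda>_. 0)" by (intro ext) simp
  then show ?thesis by simp
next
  case False
  have na: "measure M {p} = 0" for p
  proof -
    have "\<not> 0 < measure M {p}" using False by blast
    then show ?thesis using measure_nonneg[of M "{p}"] by linarith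
  qed
  have h: "(\<lambda>d. ln 2 * measure M (V d)) \<longlonglongrightarrow> ln 2 * 0"
    by (intro tendsto_mult tendsto_const V_lim[OF na])
  show ?thesis
  proof (rule tendsto_sandwich[of "\<lambda>_. 0" D sequentially "\<lambda>d. ln 2 * measure M (V d)"])
    show "eventually (\<lambda>d. 0 \<le> D d) sequentially" using D_bounds by simp
    show "eventually (\<lambda>d. D d \<le> ln 2 * measure M (V d)) sequentially" using D_bounds by simp
  qed (use h in simp_all)
qed

end

theorem corollary2:
  fixes M :: "real measure" and \<Omega> :: "real set" and T :: "real \<Rightarrow> real"
  assumes "is_interval \<Omega>"
    and "sets M = sets (restrict_space borel \<Omega>)"
    and "prob_space M"
    and "T \<in> measurable M M"
    and "\<forall>B\<in>sets M. measure M (T -` B \<inter> space M) = measure M B"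
    and "\<forall>A\<in>sets M. \<forall>B\<in>sets M.
           (\<lambda>n. measure M ((T ^^ n) -` A \<inter> space M \<inter> B)) \<longlonglongrightarrow> measure M A * measure M B"
  shows "(\<lambda>d. sorting_entropy M T d - cond_entropy_ord M T d) \<longlonglongrightarrow> 0"
proof -
  interpret mix M T \<Omega>
    unfolding mix_def sys_def sys_axioms_def mix_axioms_def using assms by auto
  have "(\<lambda>d. sorting_entropy M T d - cond_entropy_ord M T d) = D" by (rule ext) (simp add: D_def)
  then show ?thesis using D_lim by simp
qed

end
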